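(* Let $m\ge2$, $n\ge1$, $f_i:\mathbb{R}^n\to\mathbb{R}$ smooth, $F(\boldsymbol\theta)=\sum_{i=1}^mf_i(\boldsymbol\theta_i)$, $\mathbf{r}\in\mathbb{R}^n$, and let $\mathcal{G}$ be a connected undirected graph on $\{1,\dots,m\}$ with Laplacian $\mathbf{L}$. Let $\boldsymbol\theta^0\in\mathbb{R}^{mn}$ satisfy $(\mathbf{1}_m^\top\otimes\mathbf{I}_n)\boldsymbol\theta^0=\mathbf{r}$ and $\Psi_{\boldsymbol\theta^0}(\mathbf{x})=F(\boldsymbol\theta^0+\sqrt{\hat{\mathbf{L}}}\mathbf{x})$. Let $\epsilon,\gamma$ be given and suppose $\mathbf{x}\in\mathbb{R}^{mn}$ satisfies: (i) $\|\nabla\Psi_{\boldsymbol\theta^0}(\mathbf{x})\|\le\epsilon$; (ii) $(\mathbf{1}_m^\top\otimes\mathbf{I}_n)\mathbf{x}=\mathbf{0}$; (iii) $\lambda_{\min}(\nabla^2\Psi_{\boldsymbol\theta^0}(\mathbf{x}))\ge-\gamma$. Then $\boldsymbol\theta=\boldsymbol\theta^0+\sqrt{\hat{\mathbf{L}}}\mathbf{x}$ is an $(\epsilon,\gamma/\lambda^+_{\min}(\mathbf{L}))$-second-order optimal solution.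
   Context: $\boldsymbol\theta=[\boldsymbol\theta_1^\top,\dots,\boldsymbol\theta_m^\top]^\top\in\mathbb{R}^{mn}$. $\sqrt{\mathbf{L}}$ is the unique symmetric positive semidefinite square root of $\mathbf{L}$; $\hat{\mathbf{L}}=\mathbf{L}\otimes\mathbf{I}_n$, $\sqrt{\hat{\mathbf{L}}}=\sqrt{\mathbf{L}}\otimes\mathbf{I}_n$; $\lambda^+_{\min}(\mathbf{L})$ is the smallest nonzero eigenvalue of $\mathbf{L}$. A point $\boldsymbol\theta\in\mathbb{R}^{mn}$ is an $(\epsilon,\gamma)$-second-order optimal solution of $\min F(\boldsymbol\theta)$ s.t. $\sum_i\boldsymbol\theta_i=\mathbf{r}$ if: (i) $\|\sqrt{\hat{\mathbf{L}}}\nabla F(\boldsymbol\theta)\|\le\epsilon$; (ii) $(\mathbf{1}_m^\top\otimes\mathbf{I}_n)\boldsymbol\theta=\mathbf{r}$; (iii) $\mathbf{d}^\top\nabla^2F(\boldsymbol\theta)\mathbf{d}\ge-\gamma\|\mathbf{d}\|^2$ for all $\mathbf{d}\in\mathcal{T}=\{\mathbf{d}\in\mathbb{R}^{mn}:(\mathbf{1}_m^\top\otimes\mathbf{I}_n)\mathbf{d}=\mathbf{0}\}$. *)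

theory Defs
  imports "HOL-Analysis.Analysis"
begin

text \<open>Vectors in R^(mn) are represented as block vectors of type real^'n^'m:
  theta $ i is the i-th block theta_i in R^n.  Node set {1..m} is the finite type 'm.\<close>

text \<open>C-infinity smoothness: every iterated partial derivative exists (Frechet-differentiable everywhere).\<close>
definition smooth_fun :: "('a::euclidean_space \<Rightarrow> real) \<Rightarrow> bool" where
  "smooth_fun f \<longleftrightarrow> (\<exists>S. f \<in> S \<and>
     (\<forall>g\<in>S. (\<forall>x. g differentiable (at x)) \<and>
             (\<forall>b\<in>Basis. (\<lambda>x. frechet_derivative g (at x) b) \<in> S)))"

text \<open>Gradient and Hessian (as a linear operator).\<close>
definition grad :: "('a::real_inner \<Rightarrow> real) \<Rightarrow> 'a \<Rightarrow> 'a" where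
  "grad F x = (SOME g. (F has_derivative (\<lambda>h. g \<bullet> h)) (at x))"

definition hess :: "('a::real_inner \<Rightarrow> real) \<Rightarrow> 'a \<Rightarrow> 'a \<Rightarrow> 'a" where
  "hess F x = frechet_derivative (grad F) (at x)"

text \<open>Smallest eigenvalue of a linear operator.\<close>
definition lambda_min :: "('a::real_vector \<Rightarrow> 'a) \<Rightarrow> real" where
  "lambda_min H = Min {c. \<exists>v. v \<noteq> 0 \<and> H v = c *\<^sub>R v}"

text \<open>Smallest nonzero eigenvalue of a square matrix.\<close>
definition lambda_min_pos :: "real^'m^'m \<Rightarrow> real" where
  "lambda_min_pos L = Min {c. c \<noteq> 0 \<and> (\<exists>v. v \<noteq> 0 \<and> L *v v = c *\<^sub>R v)}"

text \<open>Undirected connected graph on 'm given by an edge relation; its Laplacian.\<close>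
definition connected_graph :: "('m \<Rightarrow> 'm \<Rightarrow> bool) \<Rightarrow> bool" where
  "connected_graph E \<longleftrightarrow> (\<forall>i j. E i j \<longrightarrow> E j i) \<and> (\<forall>i. \<not> E i i) \<and> (\<forall>i j. E\<^sup>*\<^sup>* i j)"

definition laplacian :: "('m::finite \<Rightarrow> 'm \<Rightarrow> bool) \<Rightarrow> real^'m^'m" where
  "laplacian E = (\<chi> i j. if i = j then real (card {k. E i k}) else if E i j then -1 else 0)"

text \<open>The unique symmetric positive semidefinite square root.\<close>
definition psd_sqrt :: "real^'m^'m \<Rightarrow> real^'m^'m" where
  "psd_sqrt L = (THE S. transpose S = S \<and> (\<forall>x. 0 \<le> x \<bullet> (S *v x)) \<and> S ** S = L)"

text \<open>Action of (A \<otimes> I_n) on a block vector.\<close>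
definition kron_I :: "real^'m^'m \<Rightarrow> real^'n^'m \<Rightarrow> real^'n^'m" where
  "kron_I A x = (\<chi> i. \<Sum>j\<in>UNIV. A $ i $ j *\<^sub>R x $ j)"

text \<open>(1_m^T \<otimes> I_n) x\<close>
definition block_sum :: "real^'n^'m \<Rightarrow> real^'n" where
  "block_sum x = (\<Sum>i\<in>UNIV. x $ i)"

definition second_order_optimal ::
  "(real^'n^'m \<Rightarrow> real) \<Rightarrow> real^'n \<Rightarrow> real^'m^'m \<Rightarrow> real \<Rightarrow> real \<Rightarrow> real^'n^'m \<Rightarrow> bool" where
  "second_order_optimal F r L \<epsilon> \<gamma> \<theta> \<longleftrightarrow>
     norm (kron_I (psd_sqrt L) (grad F \<theta>)) \<le> \<epsilon> \<and>
     block_sum \<theta> = r \<and>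
     (\<forall>d. block_sum d = 0 \<longrightarrow> d \<bullet> hess F \<theta> d \<ge> - \<gamma> * (norm d)\<^sup>2)"

end

theory Submission
  imports Defs
begin
definition symop :: "('a::real_inner \<Rightarrow> 'a) \<Rightarrow> bool" where
  "symop A \<longleftrightarrow> (\<forall>u v. A u \<bullet> v = u \<bullet> A v)"

lemma psd_kernel:
  fixes A :: "'a::euclidean_space \<Rightarrow> 'a"
  assumes lin: "linear A" and sym: "symop A" and sub: "subspace V" and inv: "A ` V \<subseteq> V"
    and psd: "\<forall>z\<in>V. 0 \<le> z \<bullet> A z" and v: "v \<in> V" and q0: "v \<bullet> A v = 0"
  shows "A v = 0"
proof -
  define w where "w = A v"
  have wV: "w \<in> V" using inv v w_def by auto
  define a where "a = w \<bullet> w"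
  define b where "b = w \<bullet> A w"
  have b0: "0 \<le> b" using psd wV b_def by auto
  have key: "0 \<le> 2 * t * a + t^2 * b" for t :: real
  proof -
    have "v + t *\<^sub>R w \<in> V" using sub v wV by (simp add: subspace_add subspace_scale)
    then have "0 \<le> (v + t *\<^sub>R w) \<bullet> A (v + t *\<^sub>R w)" using psd by blast
    also have "\<dots> = v \<bullet> A v + t * (v \<bullet> A w) + t * (w \<bullet> A v) + t^2 * (w \<bullet> A w)"
      using lin by (simp add: linear_add linear_scale inner_add_left inner_add_right power2_eq_square algebra_simps)
    also have "v \<bullet> A w = w \<bullet> w" using sym unfolding symop_def w_def by (metis inner_commute)
    finally show ?thesis using q0 unfolding a_def b_def w_def by (simp add: algebra_simps)
  qed
  have a0: "0 \<le> a" unfolding a_def by simp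
  have "a = 0"
  proof (rule ccontr)
    assume "a \<noteq> 0"
    then have ap: "a > 0" using a0 by simp
    define t where "t = - a / (b + 1)"
    have bp: "b + 1 > 0" using b0 by simp
    have ht: "t * (b + 1) = - a" unfolding t_def using bp by simp
    have "(b+1)^2 * (2 * t * a + t^2 * b) = 2*a*(b+1)*(t*(b+1)) + b*(t*(b+1))^2"
      by (simp add: power2_eq_square algebra_simps)
    also have "\<dots> = a^2 * (- b - 2)" unfolding ht by (simp add: power2_eq_square algebra_simps)
    also have "\<dots> < 0" using ap b0 by (intro mult_pos_neg) auto
    finally have "(b+1)^2 * (2 * t * a + t^2 * b) < 0" .
    moreover have "0 \<le> (b+1)^2 * (2 * t * a + t^2 * b)" using key[of t] by simp
    ultimately show False by simp
  qed
  then show ?thesis unfolding a_def w_def by simp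
qed

lemma rayleigh:
  fixes A :: "'a::euclidean_space \<Rightarrow> 'a"
  assumes lin: "linear A" and sym: "symop A" and sub: "subspace V" and inv: "A ` V \<subseteq> V"
    and ne: "V \<noteq> {0}"
  shows "\<exists>v c. v \<in> V \<and> norm v = 1 \<and> A v = c *\<^sub>R v \<and> (\<forall>y\<in>V. c * (norm y)^2 \<le> y \<bullet> A y)"
proof -
  define K where "K = sphere 0 1 \<inter> V"
  have "compact K" unfolding K_def
    by (intro compact_Int_closed compact_sphere closed_subspace sub)
  moreover have "K \<noteq> {}"
  proof -
    obtain y where y: "y \<in> V" "y \<noteq> 0" using ne sub subspace_0 by blast
    have "y /\<^sub>R norm y \<in> K" using y sub unfolding K_def by (simp add: subspace_scale)
    then show ?thesis by blast
  qed
  moreover have "continuous_on K (\<lambda>y. y \<bullet> A y)"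
  proof -
    have "bounded_linear A" using lin by (simp add: linear_conv_bounded_linear)
    then have "continuous_on K A" by (rule linear_continuous_on)
    then show ?thesis by (intro continuous_intros)
  qed
  ultimately obtain v where vK: "v \<in> K" and vmin: "\<forall>y\<in>K. v \<bullet> A v \<le> y \<bullet> A y"
    using continuous_attains_inf by blast
  define c where "c = v \<bullet> A v"
  have vV: "v \<in> V" and nv: "norm v = 1" using vK unfolding K_def by auto
  have bound: "c * (norm y)^2 \<le> y \<bullet> A y" if y: "y \<in> V" for y
  proof (cases "y = 0")
    case True then show ?thesis using lin by (simp add: linear_0)
  next
    case False
    define u where "u = y /\<^sub>R norm y"
    have "u \<in> K" using y False sub unfolding K_def u_def by (simp add: subspace_scale)
    then have "c \<le> u \<bullet> A u" using vmin c_def by auto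
    also have "u \<bullet> A u = (y \<bullet> A y) / (norm y)^2" unfolding u_def using lin
      by (simp add: linear_scale power2_eq_square field_simps)
    finally show ?thesis using False by (simp add: field_simps)
  qed
  define B where "B = (\<lambda>z. A z - c *\<^sub>R z)"
  have linB: "linear B" by (rule linearI) (auto simp: B_def linear_add[OF lin] linear_scale[OF lin] algebra_simps) 
  have symB: "symop B" using sym unfolding symop_def B_def by (simp add: inner_diff_left inner_diff_right inner_commute)
  have invB: "B ` V \<subseteq> V" using inv sub unfolding B_def by (auto intro: subspace_diff subspace_scale)
  have psdB: "\<forall>z\<in>V. 0 \<le> z \<bullet> B z" using bound unfolding B_def by (simp add: inner_diff_right power2_norm_eq_inner)
  have "v \<bullet> B v = 0" unfolding B_def using nv c_def by (simp add: inner_diff_right power2_norm_eq_inner[symmetric])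
  then have "B v = 0" using psd_kernel[OF linB symB sub invB psdB vV] by simp
  then have "A v = c *\<^sub>R v" unfolding B_def by simp
  then show ?thesis using vV nv bound by blast
qed

lemma spectral_sub:
  fixes A :: "'a::euclidean_space \<Rightarrow> 'a"
  assumes lin: "linear A" and sym: "symop A"
  shows "subspace V \<Longrightarrow> A ` V \<subseteq> V \<Longrightarrow> \<exists>B. B \<subseteq> V \<and> finite B \<and> pairwise orthogonal B \<and>
     (\<forall>b\<in>B. norm b = 1 \<and> (\<exists>c. A b = c *\<^sub>R b)) \<and> span B = V"
proof (induction "dim V" arbitrary: V rule: less_induct)
  case less
  show ?case
  proof (cases "V = {0}")
    case True
    then show ?thesis by (intro exI[of _ "{}"]) auto
  next
    case False
    obtain v c where vV: "v \<in> V" and nv: "norm v = 1" and Av: "A v = c *\<^sub>R v"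
      using rayleigh[OF lin sym less.prems False] by blast
    define V' where "V' = {z\<in>V. z \<bullet> v = 0}"
    have sub': "subspace V'" using less.prems(1) unfolding V'_def subspace_def
      by (auto simp: inner_add_left)
    have inv': "A ` V' \<subseteq> V'"
    proof
      fix y assume "y \<in> A ` V'"
      then obtain z where z: "z \<in> V'" "y = A z" by blast
      have "A z \<bullet> v = z \<bullet> A v" using sym unfolding symop_def by blast
      also have "\<dots> = 0" using z Av unfolding V'_def by simp
      finally show "y \<in> V'" using z less.prems(2) unfolding V'_def by auto
    qed
    have "v \<bullet> v = 1" using nv by (simp add: dot_square_norm)
    then have vnot: "v \<notin> V'" unfolding V'_def by simp
    have "V' \<subseteq> V" unfolding V'_def by auto
    then have "V' \<subset> V" using vV vnot by blast
    then have "span V' \<subset> span V" using sub' less.prems(1) by (simp add: span_eq_iff[THEN iffD2])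
    then have "dim V' < dim V" by (rule dim_psubset)
    then obtain B' where B': "B' \<subseteq> V'" "finite B'" "pairwise orthogonal B'"
      "\<forall>b\<in>B'. norm b = 1 \<and> (\<exists>c. A b = c *\<^sub>R b)" "span B' = V'"
      using less.hyps[OF _ sub' inv'] by blast
    define B where "B = insert v B'"
    have "B \<subseteq> V" using B'(1) vV unfolding B_def V'_def by auto
    moreover have "finite B" using B'(2) unfolding B_def by simp
    moreover have "pairwise orthogonal B" unfolding B_def pairwise_insert using B'(3) B'(1)
      by (auto simp: V'_def orthogonal_def inner_commute)
    moreover have "\<forall>b\<in>B. norm b = 1 \<and> (\<exists>c. A b = c *\<^sub>R b)" using B'(4) nv Av unfolding B_def by auto
    moreover have "span B = V"
    proof
      show "span B \<subseteq> V" using \<open>B \<subseteq> V\<close> less.prems(1) by (simp add: span_minimal)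
    next
      show "V \<subseteq> span B"
      proof
        fix z assume z: "z \<in> V"
        have "z - (z \<bullet> v) *\<^sub>R v \<in> V'" unfolding V'_def using z vV less.prems(1) nv
          by (auto simp: subspace_diff subspace_scale inner_diff_left dot_square_norm)
        then have "z - (z \<bullet> v) *\<^sub>R v \<in> span B'" using B'(5) by simp
        then show "z \<in> span B" unfolding B_def using span_breakdown_eq by blast
      qed
    qed
    ultimately show ?thesis by blast
  qed
qed

lemma inner_sum_orth:
  fixes B :: "'a::real_inner set"
  assumes "finite B" "pairwise orthogonal B" "\<forall>b\<in>B. norm b = 1" "b' \<in> B"
  shows "(\<Sum>b\<in>B. u b *\<^sub>R b) \<bullet> b' = u b'"
proof -
  have "(\<Sum>b\<in>B. u b *\<^sub>R b) \<bullet> b' = (\<Sum>b\<in>B. u b * (b \<bullet> b'))" by (simp add: inner_sum_left)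
  also have "\<dots> = (\<Sum>b\<in>B. if b = b' then u b' else 0)"
  proof (rule sum.cong)
    fix b assume b: "b \<in> B"
    show "u b * (b \<bullet> b') = (if b = b' then u b' else 0)"
    proof (cases "b = b'")
      case True then show ?thesis using assms(3) b by (simp add: dot_square_norm)
    next
      case False then show ?thesis using assms(2,4) b unfolding pairwise_def orthogonal_def by auto
    qed
  qed simp
  also have "\<dots> = u b'" using assms(1,4) by simp
  finally show ?thesis .
qed

lemma orth_expand:
  fixes B :: "'a::euclidean_space set"
  assumes "finite B" "pairwise orthogonal B" "\<forall>b\<in>B. norm b = 1" "y \<in> span B"
  shows "y = (\<Sum>b\<in>B. (y \<bullet> b) *\<^sub>R b)"
proof -
  obtain u where u: "y = (\<Sum>b\<in>B. u b *\<^sub>R b)" using assms(4) span_finite[OF assms(1)] by auto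
  have "y \<bullet> b = u b" if "b \<in> B" for b using inner_sum_orth[OF assms(1-3) that] u by simp
  then show ?thesis using u by (metis (no_types, lifting) sum.cong)
qed

lemma inner_sum_orth2:
  fixes B :: "'a::real_inner set"
  assumes "finite B" "pairwise orthogonal B" "\<forall>b\<in>B. norm b = 1"
  shows "(\<Sum>b\<in>B. u b *\<^sub>R b) \<bullet> (\<Sum>b\<in>B. w b *\<^sub>R b) = (\<Sum>b\<in>B. u b * w b)"
  proof -
  have "(\<Sum>b\<in>B. u b *\<^sub>R b) \<bullet> (\<Sum>b\<in>B. w b *\<^sub>R b) = (\<Sum>b\<in>B. w b * ((\<Sum>b\<in>B. u b *\<^sub>R b) \<bullet> b))"
    by (simp add: inner_sum_right)
  also have "\<dots> = (\<Sum>b\<in>B. w b * u b)" using inner_sum_orth[OF assms] by simp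
  finally show ?thesis by (simp add: mult.commute)
qed

lemma eig_finite:
  fixes A :: "'a::euclidean_space \<Rightarrow> 'a"
  assumes sym: "symop A"
  shows "finite {c. \<exists>v. v \<noteq> 0 \<and> A v = c *\<^sub>R v}"
proof -
  define C where "C = {c. \<exists>v. v \<noteq> 0 \<and> A v = c *\<^sub>R v}"
  define e where "e c = (SOME v. v \<noteq> 0 \<and> A v = c *\<^sub>R v)" for c
  have e: "e c \<noteq> 0 \<and> A (e c) = c *\<^sub>R e c" if "c \<in> C" for c
  proof -
    from that obtain v where "v \<noteq> 0 \<and> A v = c *\<^sub>R v" unfolding C_def by auto
    then show ?thesis unfolding e_def by (rule someI[where P="\<lambda>v. v \<noteq> 0 \<and> A v = c *\<^sub>R v"])
  qed
  have inj: "inj_on e C"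
  proof (rule inj_onI)
    fix c c' assume cc: "c \<in> C" "c' \<in> C" "e c = e c'"
    have "c *\<^sub>R e c = A (e c)" using e[OF cc(1)] by simp
    also have "\<dots> = A (e c')" using cc(3) by (rule arg_cong)
    also have "\<dots> = c' *\<^sub>R e c'" using e[OF cc(2)] by simp
    finally have "c *\<^sub>R e c = c' *\<^sub>R e c" using cc(3) by simp
    then have "(c - c') *\<^sub>R e c = 0" by (simp add: scaleR_diff_left)
    then show "c = c'" using e[OF cc(1)] by simp
  qed
  have symD: "A u \<bullet> w = u \<bullet> A w" for u w using sym unfolding symop_def by simp
  have "pairwise orthogonal (e ` C)"
    unfolding pairwise_def
  proof (intro ballI impI)
    fix x y assume xy: "x \<in> e ` C" "y \<in> e ` C" "x \<noteq> y"
    then obtain c c' where cc: "c \<in> C" "c' \<in> C" "x = e c" "y = e c'" by blast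
    then have ne: "c \<noteq> c'" using xy(3) by blast
    have "c * (x \<bullet> y) = A x \<bullet> y" using e[OF cc(1)] cc(3) by simp
    also have "\<dots> = x \<bullet> A y" by (rule symD)
    also have "\<dots> = c' * (x \<bullet> y)" using e[OF cc(2)] cc(4) by simp
    finally have "(c - c') * (x \<bullet> y) = 0" by (simp add: algebra_simps)
    then show "orthogonal x y" using ne unfolding orthogonal_def by simp
  qed
  moreover have "0 \<notin> e ` C"
  proof
    assume "0 \<in> e ` C"
    then obtain c where c: "c \<in> C" "0 = e c" by blast
    then show False using e[OF c(1)] by simp
  qed
  ultimately have "independent (e ` C)" by (rule pairwise_orthogonal_independent)
  then have "finite (e ` C)" by (rule finiteI_independent)
  then have "finite C" using inj by (rule finite_imageD)
  then show ?thesis unfolding C_def .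
qed

lemma lambda_min_bound:
  fixes A :: "'a::euclidean_space \<Rightarrow> 'a"
  assumes lin: "linear A" and sym: "symop A"
  shows "lambda_min A * (norm y)^2 \<le> y \<bullet> A y"
proof -
  have "(UNIV::'a set) \<noteq> {0}" by (metis UNIV_I nonzero_Basis SOME_Basis singletonD)
  then obtain v c where v: "norm v = 1" "A v = c *\<^sub>R v" and b: "\<forall>y. c * (norm y)^2 \<le> y \<bullet> A y"
    using rayleigh[OF lin sym subspace_UNIV] by auto
  have "c \<in> {c. \<exists>v. v \<noteq> 0 \<and> A v = c *\<^sub>R v}" using v by (intro CollectI exI[of _ v]) auto
  then have "lambda_min A \<le> c" unfolding lambda_min_def using eig_finite[OF sym] by simp
  then have "lambda_min A * (norm y)^2 \<le> c * (norm y)^2" by (simp add: mult_right_mono)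
  then show ?thesis using b by (meson order_trans)
qed

lemma lambda_min_le:
  fixes A :: "'a::euclidean_space \<Rightarrow> 'a"
  assumes sym: "symop A" and "v \<noteq> 0" "A v = c *\<^sub>R v"
  shows "lambda_min A \<le> c"
  using assms eig_finite[OF sym] unfolding lambda_min_def by (intro Min_le) auto


lemma mat_symop:
  fixes A :: "real^'m::finite^'m"
  assumes "transpose A = A"
  shows "symop ((*v) A)"
proof -
  have Aij: "A $ j $ i = A $ i $ j" for i j
    using assms by (metis transpose_def vec_lambda_beta)
  have "(A *v u) \<bullet> w = u \<bullet> (A *v w)" for u w
  proof -
    have "(A *v u) \<bullet> w = (\<Sum>i\<in>UNIV. \<Sum>j\<in>UNIV. A$i$j * u$j * w$i)"
      by (simp add: inner_vec_def matrix_vector_mult_def sum_distrib_right)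
    also have "\<dots> = (\<Sum>j\<in>UNIV. \<Sum>i\<in>UNIV. A$i$j * u$j * w$i)" by (rule sum.swap)
    also have "\<dots> = u \<bullet> (A *v w)"
      by (simp add: inner_vec_def matrix_vector_mult_def sum_distrib_left Aij mult.commute mult.left_commute)
    finally show ?thesis .
  qed
  then show ?thesis unfolding symop_def by blast
qed

lemma symop_mat:
  fixes A :: "real^'m::finite^'m"
  assumes "symop ((*v) A)"
  shows "transpose A = A"
proof -
  have col: "(A *v axis j 1) $ i = A $ i $ j" for i j
    by (simp add: matrix_vector_mult_basis column_def)
  have "A $ j $ i = A $ i $ j" for i j
  proof -
    have "A $ i $ j = (A *v axis j 1) \<bullet> axis i 1" by (simp add: col flip: cart_eq_inner_axis)
    also have "\<dots> = axis j 1 \<bullet> (A *v axis i 1)" using assms unfolding symop_def by simp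
    also have "\<dots> = (A *v axis i 1) \<bullet> axis j 1" by (rule inner_commute)
    also have "\<dots> = A $ j $ i" by (simp add: col flip: cart_eq_inner_axis)
    finally show ?thesis by simp
  qed
  then show ?thesis by (simp add: vec_eq_iff transpose_def)
qed

lemma mat_eqI:
  fixes A B :: "real^'m::finite^'m"
  assumes "\<And>x. A *v x = B *v x"
  shows "A = B"
proof -
  have "(*v) A = (*v) B" by (intro ext assms)
  then have "matrix ((*v) A) = matrix ((*v) B)" by simp
  then show ?thesis by (simp add: matrix_of_matrix_vector_mul)
qed

lemma eigenbasis:
  fixes A :: "'a::euclidean_space \<Rightarrow> 'a"
  assumes lin: "linear A" and sym: "symop A"
  shows "\<exists>B. finite B \<and> pairwise orthogonal B \<and> (\<forall>b\<in>B. norm b = 1 \<and> A b = (b \<bullet> A b) *\<^sub>R b) \<and> span B = UNIV"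
proof -
  obtain B where B: "finite B" "pairwise orthogonal B" "\<forall>b\<in>B. norm b = 1 \<and> (\<exists>c. A b = c *\<^sub>R b)" "span B = UNIV"
    using spectral_sub[OF lin sym subspace_UNIV subset_UNIV] by (metis (no_types))
  have Ab: "A b = (b \<bullet> A b) *\<^sub>R b" if "b \<in> B" for b
  proof -
    have h: "norm b = 1 \<and> (\<exists>c. A b = c *\<^sub>R b)" using B(3) that by (rule bspec)
    then obtain c where c: "A b = c *\<^sub>R b" "norm b = 1" by auto
    have bb: "b \<bullet> b = 1" by (metis c(2) power2_norm_eq_inner one_power2)
    have "b \<bullet> A b = c" using bb by (simp add: c(1))
    then show ?thesis using c by simp
  qed
  have "\<forall>b\<in>B. norm b = 1 \<and> A b = (b \<bullet> A b) *\<^sub>R b"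
  proof
    fix b assume bB: "b \<in> B"
    have "norm b = 1" using B(3) bB by blast
    then show "norm b = 1 \<and> A b = (b \<bullet> A b) *\<^sub>R b" using Ab[OF bB] by (rule conjI)
  qed
  then show ?thesis using B(1,2,4) by (intro exI[of _ B] conjI)
qed

lemma orth_delta:
  fixes B :: "'a::real_inner set"
  assumes "finite B" "pairwise orthogonal B" "\<forall>b\<in>B. norm b = 1" "b \<in> B"
  shows "(\<Sum>b'\<in>B. (c b' * (b \<bullet> b')) *\<^sub>R b') = c b *\<^sub>R b"
proof -
  have "(\<Sum>b'\<in>B. (c b' * (b \<bullet> b')) *\<^sub>R b') = (\<Sum>b'\<in>B. if b' = b then c b *\<^sub>R b else 0)"
  proof (rule sum.cong)
    fix b' assume b': "b' \<in> B"
    show "(c b' * (b \<bullet> b')) *\<^sub>R b' = (if b' = b then c b *\<^sub>R b else 0)"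
    proof (cases "b' = b")
      case True
      have "b \<bullet> b = 1" using assms(3,4) by (metis power2_norm_eq_inner one_power2)
      then show ?thesis using True by simp
    next
      case False
      then have "b \<bullet> b' = 0" using assms(2,4) b' unfolding pairwise_def orthogonal_def by auto
      then show ?thesis using False by simp
    qed
  qed simp
  also have "\<dots> = c b *\<^sub>R b" using assms(1,4) by (simp add: sum.delta')
  finally show ?thesis .
qed

lemma psd_sqrt_unique:
  fixes S T :: "real^'m::finite^'m"
  assumes sS: "transpose S = S" and pS: "\<forall>x. 0 \<le> x \<bullet> (S *v x)"
    and sT: "transpose T = T" and pT: "\<forall>x. 0 \<le> x \<bullet> (T *v x)"
    and eq: "S ** S = T ** T"
  shows "S = T"
proof -
  define D where "D = S - T"
  have sD: "transpose D = D" unfolding D_def using sS sT by (simp add: vec_eq_iff transpose_def)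
  have symD: "symop ((*v) D)" by (rule mat_symop[OF sD])
  have symS: "symop ((*v) S)" by (rule mat_symop[OF sS])
  have symT: "symop ((*v) T)" by (rule mat_symop[OF sT])
  obtain B where B: "finite B" "pairwise orthogonal B" "\<forall>b\<in>B. norm b = 1 \<and> D *v b = (b \<bullet> (D *v b)) *\<^sub>R b" "span B = UNIV"
    using eigenbasis[OF matrix_vector_mul_linear symD] by (metis (no_types))
  have Db0: "D *v b = 0" if bB: "b \<in> B" for b
  proof -
    define d where "d = b \<bullet> (D *v b)"
    have nb: "norm b = 1" using B(3) bB by blast
    have Db: "D *v b = d *\<^sub>R b" unfolding d_def using B(3) bB by blast
    have "S *v (S *v b) = T *v (T *v b)" using eq by (simp add: matrix_vector_mul_assoc)
    moreover have "S *v (S *v b) - T *v (T *v b) = S *v (D *v b) + D *v (T *v b)"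
      unfolding D_def by (simp add: matrix_vector_mult_diff_rdistrib matrix_vector_mult_diff_distrib)
    ultimately have "0 = b \<bullet> (S *v (D *v b)) + b \<bullet> (D *v (T *v b))" by (simp add: inner_add_right[symmetric])
    also have "b \<bullet> (D *v (T *v b)) = (D *v b) \<bullet> (T *v b)"
      using symD unfolding symop_def by simp
    also have "\<dots> = d * (b \<bullet> (T *v b))" by (simp add: Db)
    also have "b \<bullet> (S *v (D *v b)) = d * (b \<bullet> (S *v b))" by (simp add: Db matrix_vector_mult_scaleR)
    finally have sum0: "d * (b \<bullet> (S *v b) + b \<bullet> (T *v b)) = 0" by (simp add: algebra_simps)
    have "d = 0"
    proof (rule ccontr)
      assume "d \<noteq> 0"
      then have "b \<bullet> (S *v b) + b \<bullet> (T *v b) = 0" using sum0 by simp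
      moreover have "0 \<le> b \<bullet> (S *v b)" "0 \<le> b \<bullet> (T *v b)" using pS pT by auto
      ultimately have z: "b \<bullet> (S *v b) = 0" "b \<bullet> (T *v b) = 0" by linarith+
      have "S *v b = 0"
        using psd_kernel[OF matrix_vector_mul_linear symS subspace_UNIV subset_UNIV] pS z(1) by blast
      moreover have "T *v b = 0"
        using psd_kernel[OF matrix_vector_mul_linear symT subspace_UNIV subset_UNIV] pT z(2) by blast
      ultimately have "D *v b = 0" unfolding D_def by (simp add: matrix_vector_mult_diff_rdistrib)
      then have "d *\<^sub>R b = 0" using Db by simp
      then show False using \<open>d \<noteq> 0\<close> nb by auto
    qed
    then show ?thesis using Db by simp
  qed
  have "S *v y = T *v y" for y
  proof -
    have y: "y = (\<Sum>b\<in>B. (y \<bullet> b) *\<^sub>R b)"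
      using orth_expand[OF B(1,2)] B(3,4) by blast
    have "D *v y = (\<Sum>b\<in>B. (y \<bullet> b) *\<^sub>R (D *v b))"
      by (subst y) (simp add: vec.sum matrix_vector_mult_scaleR)
    also have "\<dots> = 0" using Db0 by simp
    finally show ?thesis unfolding D_def by (simp add: matrix_vector_mult_diff_rdistrib)
  qed
  then show ?thesis by (rule mat_eqI)
qed


lemma psd_sqrt_basis:
  fixes L :: "real^'m::finite^'m"
  assumes symL: "transpose L = L" and psdL: "\<forall>x. 0 \<le> x \<bullet> (L *v x)"
  obtains B where "finite B" "pairwise orthogonal B" "\<forall>b\<in>B. norm b = 1" "span B = UNIV"
    "\<forall>b\<in>B. L *v b = (b \<bullet> (L *v b)) *\<^sub>R b"
    "\<forall>b\<in>B. psd_sqrt L *v b = sqrt (b \<bullet> (L *v b)) *\<^sub>R b"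
    "transpose (psd_sqrt L) = psd_sqrt L" "\<forall>x. 0 \<le> x \<bullet> (psd_sqrt L *v x)"
    "psd_sqrt L ** psd_sqrt L = L"
proof -
  obtain B where B: "finite B" "pairwise orthogonal B" "\<forall>b\<in>B. norm b = 1 \<and> L *v b = (b \<bullet> (L *v b)) *\<^sub>R b" "span B = UNIV"
    using eigenbasis[OF matrix_vector_mul_linear mat_symop[OF symL]] by (metis (no_types))
  have B3: "\<forall>b\<in>B. norm b = 1" using B(3) by blast
  have B5: "\<forall>b\<in>B. L *v b = (b \<bullet> (L *v b)) *\<^sub>R b" using B(3) by blast
  define \<mu> where "\<mu> b = b \<bullet> (L *v b)" for b
  have mu0: "0 \<le> \<mu> b" for b unfolding \<mu>_def using psdL by blast
  define Sop where "Sop y = (\<Sum>b\<in>B. (sqrt (\<mu> b) * (y \<bullet> b)) *\<^sub>R b)" for y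
  have linS: "linear Sop"
    by (rule linearI) (simp_all add: Sop_def inner_add_left distrib_left scaleR_add_left sum.distrib scaleR_sum_right mult.left_commute)
  define S where "S = matrix Sop"
  have Sv: "S *v y = Sop y" for y
    unfolding S_def by (rule matrix_works) (simp add: linear_matrix_vector_mul_eq linS)
  have Sb: "S *v b = sqrt (\<mu> b) *\<^sub>R b" if "b \<in> B" for b
  proof -
    have "S *v b = (\<Sum>b'\<in>B. (sqrt (\<mu> b') * (b \<bullet> b')) *\<^sub>R b')" by (simp add: Sv Sop_def)
    also have "\<dots> = sqrt (\<mu> b) *\<^sub>R b" by (rule orth_delta[OF B(1,2) B3 that])
    finally show ?thesis .
  qed
  have Sinner: "Sop u \<bullet> w = (\<Sum>b\<in>B. sqrt (\<mu> b) * (u \<bullet> b) * (b \<bullet> w))" for u w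
    by (simp add: Sop_def inner_sum_left)
  have "symop ((*v) S)" unfolding symop_def
  proof (intro allI)
    fix u w
    have "(S *v u) \<bullet> w = (\<Sum>b\<in>B. sqrt (\<mu> b) * (u \<bullet> b) * (b \<bullet> w))" by (simp add: Sv Sinner)
    also have "\<dots> = (\<Sum>b\<in>B. sqrt (\<mu> b) * (w \<bullet> b) * (b \<bullet> u))" by (rule sum.cong) (simp_all add: inner_commute)
    also have "\<dots> = (S *v w) \<bullet> u" by (simp only: Sv Sinner)
    finally show "(S *v u) \<bullet> w = u \<bullet> (S *v w)" by (simp add: inner_commute)
  qed
  then have sS: "transpose S = S" by (rule symop_mat)
  have pS: "\<forall>x. 0 \<le> x \<bullet> (S *v x)"
  proof
    fix x
    have "x \<bullet> (S *v x) = Sop x \<bullet> x" unfolding Sv by (rule inner_commute)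
    also have "\<dots> = (\<Sum>b\<in>B. sqrt (\<mu> b) * (x \<bullet> b) * (b \<bullet> x))" by (rule Sinner)
    also have "\<dots> = (\<Sum>b\<in>B. sqrt (\<mu> b) * (x \<bullet> b)^2)" by (simp add: inner_commute power2_eq_square mult.assoc)
    also have "\<dots> \<ge> 0" using mu0 by (intro sum_nonneg mult_nonneg_nonneg) auto
    finally show "0 \<le> x \<bullet> (S *v x)" .
  qed
  have SS: "S ** S = L"
  proof (rule mat_eqI)
    fix y
    have y: "y = (\<Sum>b\<in>B. (y \<bullet> b) *\<^sub>R b)"
      using orth_expand[OF B(1,2) B3] B(4) by blast
    have Syb: "Sop y \<bullet> b = sqrt (\<mu> b) * (y \<bullet> b)" if "b \<in> B" for b
      unfolding Sop_def by (rule inner_sum_orth[OF B(1,2) B3 that])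
    have "(S ** S) *v y = Sop (Sop y)" by (simp add: Sv flip: matrix_vector_mul_assoc)
    also have "\<dots> = (\<Sum>b\<in>B. (sqrt (\<mu> b) * (Sop y \<bullet> b)) *\<^sub>R b)" by (simp add: Sop_def[of "Sop y"])
    also have "\<dots> = (\<Sum>b\<in>B. (\<mu> b * (y \<bullet> b)) *\<^sub>R b)"
    proof (rule sum.cong)
      fix b assume "b \<in> B"
      then show "(sqrt (\<mu> b) * (Sop y \<bullet> b)) *\<^sub>R b = (\<mu> b * (y \<bullet> b)) *\<^sub>R b"
        using Syb mu0[of b] by (simp add: mult.assoc[symmetric] real_sqrt_mult_self)
    qed simp
    also have "\<dots> = (\<Sum>b\<in>B. (y \<bullet> b) *\<^sub>R (L *v b))"
    proof (rule sum.cong)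
      fix b assume "b \<in> B"
      then have "L *v b = \<mu> b *\<^sub>R b" using B5 unfolding \<mu>_def by blast
      then show "(\<mu> b * (y \<bullet> b)) *\<^sub>R b = (y \<bullet> b) *\<^sub>R (L *v b)" by (simp add: mult.commute)
    qed simp
    also have "\<dots> = L *v y" by (subst (2) y) (simp add: vec.sum matrix_vector_mult_scaleR)
    finally show "(S ** S) *v y = L *v y" .
  qed
  have "psd_sqrt L = S" unfolding psd_sqrt_def
  proof (rule the_equality)
    show "transpose S = S \<and> (\<forall>x. 0 \<le> x \<bullet> (S *v x)) \<and> S ** S = L" using sS pS SS by blast
  next
    fix T assume T: "transpose T = T \<and> (\<forall>x. 0 \<le> x \<bullet> (T *v x)) \<and> T ** T = L"
    show "T = S" using psd_sqrt_unique[of T S] T sS pS SS by metis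
  qed
  then show ?thesis using that[OF B(1,2) B3 B(4) B5] Sb sS pS SS unfolding \<mu>_def by simp
qed

lemma lap_sym:
  assumes g: "connected_graph E"
  shows "transpose (laplacian E) = laplacian E"
  using g unfolding connected_graph_def laplacian_def transpose_def by (auto simp: vec_eq_iff)

lemma lap_mult:
  fixes x :: "real^'m::finite"
  assumes g: "connected_graph E"
  shows "(laplacian E *v x) $ i = (\<Sum>j\<in>UNIV. if E i j then x$i - x$j else 0)"
proof -
  have irr: "\<not> E i i" using g unfolding connected_graph_def by blast
  have trm: "laplacian E $ i $ j * x$j = (if j = i then real (card {k. E i k}) * x$i else 0) - (if E i j then x$j else 0)" for j
    using irr unfolding laplacian_def by auto
  have "(laplacian E *v x) $ i = (\<Sum>j\<in>UNIV. laplacian E $ i $ j * x$j)"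
    by (simp add: matrix_vector_mult_def)
  also have "\<dots> = real (card {k. E i k}) * x$i - (\<Sum>j\<in>UNIV. if E i j then x$j else 0)"
    by (simp add: trm sum_subtractf)
  also have "\<dots> = (\<Sum>j\<in>UNIV. if E i j then x$i - x$j else 0)"
  proof -
    have "(\<Sum>j\<in>UNIV. if E i j then x$i - x$j else 0) = (\<Sum>j\<in>{k. E i k}. x$i - x$j)"
      by (simp add: sum.If_cases)
    also have "\<dots> = real (card {k. E i k}) * x$i - (\<Sum>j\<in>{k. E i k}. x$j)"
      by (simp add: sum_subtractf)
    also have "(\<Sum>j\<in>{k. E i k}. x$j) = (\<Sum>j\<in>UNIV. if E i j then x$j else 0)"
      by (simp add: sum.If_cases)
    finally show ?thesis by simp
  qed
  finally show ?thesis .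
qed

lemma lap_quad:
  fixes x :: "real^'m::finite"
  assumes g: "connected_graph E"
  shows "2 * (x \<bullet> (laplacian E *v x)) = (\<Sum>i\<in>UNIV. \<Sum>j\<in>UNIV. if E i j then (x$i - x$j)^2 else 0)"
proof -
  have symE: "E i j = E j i" for i j using g unfolding connected_graph_def by blast
  define P where "P = (\<Sum>i\<in>UNIV. \<Sum>j\<in>UNIV. if E i j then x$i * x$i - x$i * x$j else 0)"
  have "x \<bullet> (laplacian E *v x) = (\<Sum>i\<in>UNIV. x$i * (\<Sum>j\<in>UNIV. if E i j then x$i - x$j else 0))"
    by (simp add: inner_vec_def lap_mult[OF g])
  also have "\<dots> = P" unfolding P_def by (simp add: sum_distrib_left if_distrib right_diff_distrib cong: if_cong)
  finally have P1: "x \<bullet> (laplacian E *v x) = P" .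
  have "P = (\<Sum>j\<in>UNIV. \<Sum>i\<in>UNIV. if E i j then x$i * x$i - x$i * x$j else 0)" unfolding P_def by (rule sum.swap)
  also have "\<dots> = (\<Sum>i\<in>UNIV. \<Sum>j\<in>UNIV. if E i j then x$j * x$j - x$j * x$i else 0)"
    by (simp add: symE)
  finally have P2: "P = \<dots>" .
  have "2 * P = P + P" by simp
  also have "\<dots> = (\<Sum>i\<in>UNIV. \<Sum>j\<in>UNIV. (if E i j then x$i * x$i - x$i * x$j else 0) + (if E i j then x$j * x$j - x$j * x$i else 0))"
    by (subst (2) P2) (simp add: P_def sum.distrib)
  also have "\<dots> = (\<Sum>i\<in>UNIV. \<Sum>j\<in>UNIV. if E i j then (x$i - x$j)^2 else 0)"
    by (intro sum.cong refl) (simp add: power2_eq_square algebra_simps)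
  finally show ?thesis using P1 by simp
qed

lemma lap_psd:
  assumes g: "connected_graph E"
  shows "\<forall>x::real^'m::finite. 0 \<le> x \<bullet> (laplacian E *v x)"
proof
  fix x :: "real^'m"
  have "0 \<le> (\<Sum>i\<in>UNIV. \<Sum>j\<in>UNIV. if E i j then (x$i - x$j)^2 else (0::real))"
    by (intro sum_nonneg) auto
  then show "0 \<le> x \<bullet> (laplacian E *v x)" using lap_quad[OF g, of x] by simp
qed

lemma lap_kernel:
  fixes u :: "real^'m::finite"
  assumes g: "connected_graph E" and u: "laplacian E *v u = 0"
  shows "u $ i = u $ j"
proof -
  have "(\<Sum>i\<in>UNIV. \<Sum>j\<in>UNIV. if E i j then (u$i - u$j)^2 else (0::real)) = 0"
    using lap_quad[OF g, of u] u by simp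
  then have "\<forall>i\<in>UNIV. (\<Sum>j\<in>UNIV. if E i j then (u$i - u$j)^2 else (0::real)) = 0"
    by (subst (asm) sum_nonneg_eq_0_iff) (auto intro: sum_nonneg)
  have edge: "u$a = u$b" if ab: "E a b" for a b
  proof -
    have "(\<Sum>j\<in>UNIV. if E a j then (u$a - u$j)^2 else (0::real)) = 0" using \<open>\<forall>i\<in>UNIV. _\<close> by blast
    then have "\<forall>j\<in>UNIV. (if E a j then (u$a - u$j)^2 else (0::real)) = 0"
      by (subst (asm) sum_nonneg_eq_0_iff) auto
    then have "(u$a - u$b)^2 = 0" using ab by (metis (full_types) UNIV_I)
    then show ?thesis by simp
  qed
  have "E\<^sup>*\<^sup>* i j" using g unfolding connected_graph_def by blast
  then show ?thesis
    by (induction rule: rtranclp_induct) (auto dest: edge)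
qed


lemma lap_lambda_pos:
  fixes E :: "'m::finite \<Rightarrow> 'm \<Rightarrow> bool"
  assumes g: "connected_graph E" and m2: "CARD('m) \<ge> 2"
    and B: "finite B" "pairwise orthogonal B" "\<forall>b\<in>B. norm b = 1" "span B = UNIV"
    "\<forall>b\<in>B. laplacian E *v b = (b \<bullet> (laplacian E *v b)) *\<^sub>R b"
  shows "0 < lambda_min_pos (laplacian E) \<and>
    (\<forall>b\<in>B. b \<bullet> (laplacian E *v b) \<noteq> 0 \<longrightarrow> lambda_min_pos (laplacian E) \<le> b \<bullet> (laplacian E *v b))"
proof -
  define L where "L = laplacian E"
  define C where "C = {c. c \<noteq> 0 \<and> (\<exists>v. v \<noteq> 0 \<and> L *v v = c *\<^sub>R v)}"
  have symL: "symop ((*v) L)" unfolding L_def by (rule mat_symop[OF lap_sym[OF g]])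
  have finC: "finite C"
    by (rule finite_subset[OF _ eig_finite[OF symL]]) (auto simp: C_def)
  have inC: "b \<bullet> (L *v b) \<in> C" if "b \<in> B" "b \<bullet> (L *v b) \<noteq> 0" for b
  proof -
    have "norm b = 1" using B(3) that(1) by blast
    then have "b \<noteq> 0" by auto
    moreover have "L *v b = (b \<bullet> (L *v b)) *\<^sub>R b" using B(5) that(1) unfolding L_def by (rule bspec)
    ultimately show ?thesis unfolding C_def using that(2) by (intro CollectI conjI exI[of _ b])
  qed
  have pos: "c > 0" if "c \<in> C" for c
  proof -
    have cc: "c \<noteq> 0" "\<exists>v. v \<noteq> 0 \<and> L *v v = c *\<^sub>R v" using that unfolding C_def by simp_all
    from cc(2) obtain v where v: "v \<noteq> 0" "L *v v = c *\<^sub>R v" by auto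
    have "0 \<le> v \<bullet> (L *v v)" using lap_psd[OF g] unfolding L_def by blast
    also have "v \<bullet> (L *v v) = c * (v \<bullet> v)" using v by simp
    finally have "0 \<le> c * (v \<bullet> v)" .
    moreover have "v \<bullet> v > 0" using v(1) by simp
    ultimately have "0 \<le> c" by (simp add: zero_le_mult_iff)
    then show ?thesis using cc(1) by simp
  qed
  have ne: "C \<noteq> {}"
  proof
    assume C0: "C = {}"
    have Lb0: "L *v b = 0" if "b \<in> B" for b
    proof -
      have h: "b \<bullet> (L *v b) = 0" using inC[OF that] C0 by blast
      have e: "L *v b = (b \<bullet> (L *v b)) *\<^sub>R b" using B(5) that unfolding L_def by blast
      show ?thesis by (subst e) (simp only: h scale_zero_left)
    qed
    have L0: "L *v y = 0" for y
    proof -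
      have y: "y = (\<Sum>b\<in>B. (y \<bullet> b) *\<^sub>R b)" using orth_expand[OF B(1,2,3)] B(4) by blast
      have "L *v y = (\<Sum>b\<in>B. (y \<bullet> b) *\<^sub>R (L *v b))"
        by (subst y) (simp add: vec.sum matrix_vector_mult_scaleR)
      also have "\<dots> = 0" using Lb0 by simp
      finally show ?thesis .
    qed
    have "\<exists>i j::'m. i \<noteq> j"
    proof (rule ccontr)
      assume "\<not> (\<exists>i j::'m. i \<noteq> j)"
      then have "card (UNIV::'m set) \<le> 1" by (simp add: card_le_Suc0_iff_eq)
      then show False using m2 by simp
    qed
    then obtain i j :: 'm where ij: "i \<noteq> j" by blast
    have "E\<^sup>*\<^sup>* i j" using g unfolding connected_graph_def by blast
    then have "\<exists>k. E i k" using ij by (induction rule: converse_rtranclp_induct) auto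
    then obtain k where k: "E i k" by blast
    have "L $ i $ i = real (card {k. E i k})" unfolding L_def laplacian_def by simp
    moreover have "card {k. E i k} > 0" using k by (auto simp: card_gt_0_iff)
    moreover have "L $ i $ i = (L *v axis i 1) $ i" by (simp add: matrix_vector_mult_basis column_def)
    ultimately show False using L0 by simp
  qed
  have "0 < Min C" using finC ne pos by (simp add: Min_gr_iff)
  moreover have "\<forall>b\<in>B. b \<bullet> (L *v b) \<noteq> 0 \<longrightarrow> Min C \<le> b \<bullet> (L *v b)"
  proof (intro ballI impI)
    fix b assume "b \<in> B" "b \<bullet> (L *v b) \<noteq> 0"
    then show "Min C \<le> b \<bullet> (L *v b)" using Min_le[OF finC inC] by blast
  qed
  ultimately show ?thesis unfolding lambda_min_pos_def C_def L_def by simp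
qed

definition colv :: "'n \<Rightarrow> real^'n^'m \<Rightarrow> real^'m" where
  "colv k y = (\<chi> j. y $ j $ k)"

lemma K_lin: "linear (kron_I A)"
  by (rule linearI) (simp_all add: kron_I_def vec_eq_iff scaleR_add_right sum.distrib scaleR_sum_right mult_ac)

lemma K_col: "(kron_I A y) $ i $ k = (A *v colv k y) $ i"
  by (simp add: kron_I_def colv_def matrix_vector_mult_def sum_component)

lemma K_colv: "colv k (kron_I A y) = A *v colv k y"
  by (simp add: vec_eq_iff K_col[symmetric]) (simp add: colv_def)

lemma inner_cols: "(y::real^'n::finite^'m::finite) \<bullet> z = (\<Sum>k\<in>UNIV. colv k y \<bullet> colv k z)"
proof -
  have "y \<bullet> z = (\<Sum>i\<in>UNIV. \<Sum>k\<in>UNIV. y$i$k * z$i$k)" by (simp add: inner_vec_def)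
  also have "\<dots> = (\<Sum>k\<in>UNIV. \<Sum>i\<in>UNIV. y$i$k * z$i$k)" by (rule sum.swap)
  also have "\<dots> = (\<Sum>k\<in>UNIV. colv k y \<bullet> colv k z)" by (simp add: inner_vec_def colv_def)
  finally show ?thesis .
qed

lemma K_sym:
  fixes A :: "real^'m::finite^'m"
  assumes "transpose A = A"
  shows "kron_I A u \<bullet> w = u \<bullet> kron_I A (w::real^'n::finite^'m)"
proof -
  have s: "symop ((*v) A)" by (rule mat_symop[OF assms])
  have "kron_I A u \<bullet> w = (\<Sum>k\<in>UNIV. (A *v colv k u) \<bullet> colv k w)"
    by (simp add: inner_cols K_colv)
  also have "\<dots> = (\<Sum>k\<in>UNIV. colv k u \<bullet> (A *v colv k w))" using s unfolding symop_def by simp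
  also have "\<dots> = u \<bullet> kron_I A w"
    by (simp add: inner_cols K_colv)
  finally show ?thesis .
qed

lemma K_norm: "(norm (y::real^'n::finite^'m::finite))^2 = (\<Sum>k\<in>UNIV. (norm (colv k y))^2)"
  by (simp add: power2_norm_eq_inner inner_cols)

lemma K_const:
  fixes A :: "real^'m::finite^'m"
  assumes "A *v (\<chi> i. 1) = 0"
  shows "kron_I A (\<chi> i. e) = (0::real^'n::finite^'m)"
proof -
  have "(\<Sum>j\<in>UNIV. A $ i $ j) = 0" for i
    using assms by (simp add: vec_eq_iff matrix_vector_mult_def)
  then show ?thesis by (simp add: kron_I_def vec_eq_iff scaleR_sum_left[symmetric])
qed

lemma K_block_sum:
  fixes A :: "real^'m::finite^'m"
  assumes "transpose A = A" "A *v (\<chi> i. 1) = 0"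
  shows "block_sum (kron_I A (y::real^'n::finite^'m)) = 0"
proof -
  have Aij: "A $ j $ i = A $ i $ j" for i j
    using assms(1) by (metis transpose_def vec_lambda_beta)
  have cs: "(\<Sum>i\<in>UNIV. A $ i $ j) = 0" for j
  proof -
    have "(\<Sum>i\<in>UNIV. A $ j $ i) = 0" using assms(2) by (simp add: vec_eq_iff matrix_vector_mult_def)
    then show ?thesis by (simp add: Aij)
  qed
  have "block_sum (kron_I A y) = (\<Sum>i\<in>UNIV. \<Sum>j\<in>UNIV. A $ i $ j *\<^sub>R y $ j)"
    by (simp add: block_sum_def kron_I_def)
  also have "\<dots> = (\<Sum>j\<in>UNIV. \<Sum>i\<in>UNIV. A $ i $ j *\<^sub>R y $ j)" by (rule sum.swap)
  also have "\<dots> = (\<Sum>j\<in>UNIV. (\<Sum>i\<in>UNIV. A $ i $ j) *\<^sub>R y $ j)" by (simp add: scaleR_sum_left)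
  also have "\<dots> = 0" by (simp add: cs)
  finally show ?thesis .
qed

lemma sqrt_one:
  fixes S L :: "real^'m::finite^'m"
  assumes "transpose S = S" "S ** S = L" "L *v (\<chi> i. 1) = 0"
  shows "S *v (\<chi> i. 1) = 0"
proof -
  define one :: "real^'m" where "one = (\<chi> i. 1)"
  have "(S *v one) \<bullet> (S *v one) = one \<bullet> (S *v (S *v one))" using mat_symop[OF assms(1)] unfolding symop_def by blast
  also have "\<dots> = one \<bullet> (L *v one)" using assms(2) by (simp add: matrix_vector_mul_assoc)
  also have "\<dots> = 0" using assms(3) one_def by simp
  finally show ?thesis unfolding one_def by simp
qed


lemma K_preimage:
  fixes E :: "'m::finite \<Rightarrow> 'm \<Rightarrow> bool" and d :: "real^'n::finite^'m"
  assumes g: "connected_graph E" and m2: "CARD('m) \<ge> 2" and bs: "block_sum d = 0"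
  shows "\<exists>y. kron_I (psd_sqrt (laplacian E)) y = d \<and>
    lambda_min_pos (laplacian E) * (norm y)^2 \<le> (norm d)^2"
proof -
  define L where "L = laplacian E"
  define S where "S = psd_sqrt L"
  obtain B where B: "finite B" "pairwise orthogonal B" "\<forall>b\<in>B. norm b = 1" "span B = UNIV"
    "\<forall>b\<in>B. L *v b = (b \<bullet> (L *v b)) *\<^sub>R b"
    "\<forall>b\<in>B. S *v b = sqrt (b \<bullet> (L *v b)) *\<^sub>R b"
    using psd_sqrt_basis[OF lap_sym[OF g] lap_psd[OF g]] unfolding L_def S_def by (metis (no_types))
  define lp where "lp = lambda_min_pos L"
  have lp: "0 < lp" "\<forall>b\<in>B. b \<bullet> (L *v b) \<noteq> 0 \<longrightarrow> lp \<le> b \<bullet> (L *v b)"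
    using lap_lambda_pos[OF g m2 B(1-5)[unfolded L_def]] unfolding lp_def L_def by auto
  define \<mu> where "\<mu> b = b \<bullet> (L *v b)" for b
  have mu0: "0 \<le> \<mu> b" for b unfolding \<mu>_def L_def using lap_psd[OF g] by blast
  define c where "c k = colv k d" for k
  have cb0: "c k \<bullet> b = 0" if bB: "b \<in> B" and z: "\<mu> b = 0" for k b
  proof -
    have e: "L *v b = (b \<bullet> (L *v b)) *\<^sub>R b" using B(5) bB by (rule bspec)
    have "L *v b = 0" using z unfolding \<mu>_def by (subst e) (simp only: scale_zero_left)
    then have const: "b $ i = b $ j" for i j using lap_kernel[OF g] unfolding L_def by blast
    obtain i0 :: 'm where True by blast
    have "c k \<bullet> b = (\<Sum>i\<in>UNIV. d $ i $ k * b $ i)" by (simp add: c_def colv_def inner_vec_def)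
    also have "\<dots> = (\<Sum>i\<in>UNIV. d $ i $ k * b $ i0)" by (rule sum.cong[OF refl]) (metis const)
    also have "\<dots> = (\<Sum>i\<in>UNIV. d $ i $ k) * b $ i0" by (simp add: sum_distrib_right)
    also have "(\<Sum>i\<in>UNIV. d $ i $ k) = block_sum d $ k" by (simp add: block_sum_def sum_component)
    finally show ?thesis using bs by simp
  qed
  define coef where "coef k b = (if \<mu> b = 0 then 0 else (c k \<bullet> b) / sqrt (\<mu> b))" for k b
  define Y where "Y k = (\<Sum>b\<in>B. coef k b *\<^sub>R b)" for k
  have cexp: "c k = (\<Sum>b\<in>B. (c k \<bullet> b) *\<^sub>R b)" for k using orth_expand[OF B(1,2,3)] B(4) by blast
  have SY: "S *v Y k = c k" for k
  proof -
    have "S *v Y k = (\<Sum>b\<in>B. coef k b *\<^sub>R (S *v b))" by (simp add: Y_def vec.sum matrix_vector_mult_scaleR)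
    also have "\<dots> = (\<Sum>b\<in>B. (c k \<bullet> b) *\<^sub>R b)"
    proof (rule sum.cong)
      fix b assume bB: "b \<in> B"
      have Sb: "S *v b = sqrt (\<mu> b) *\<^sub>R b" using B(6) bB unfolding \<mu>_def by (rule bspec)
      show "coef k b *\<^sub>R (S *v b) = (c k \<bullet> b) *\<^sub>R b"
      proof (cases "\<mu> b = 0")
        case True then show ?thesis using cb0[OF bB True] by (simp add: coef_def)
      next
        case False
        then have "sqrt (\<mu> b) > 0" using mu0[of b] by simp
        then show ?thesis using False by (simp add: coef_def Sb)
      qed
    qed simp
    also have "\<dots> = c k" by (rule cexp[symmetric])
    finally show ?thesis .
  qed
  define y :: "real^'n^'m" where "y = (\<chi> i. \<chi> k. Y k $ i)"
  have cy: "colv k y = Y k" for k by (simp add: colv_def y_def vec_eq_iff)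
  have Ky: "kron_I S y = d"
    by (simp add: vec_eq_iff K_col cy SY) (simp add: c_def colv_def)
  have nY: "lp * (norm (Y k))^2 \<le> (norm (c k))^2" for k
  proof -
    have "(norm (Y k))^2 = (\<Sum>b\<in>B. coef k b * coef k b)"
      unfolding power2_norm_eq_inner Y_def by (rule inner_sum_orth2[OF B(1,2,3)])
    moreover have "(norm (c k))^2 = (\<Sum>b\<in>B. (c k \<bullet> b) * (c k \<bullet> b))"
      unfolding power2_norm_eq_inner by (subst (1 2) cexp) (rule inner_sum_orth2[OF B(1,2,3)])
    moreover have "lp * (coef k b * coef k b) \<le> (c k \<bullet> b) * (c k \<bullet> b)" if bB: "b \<in> B" for b
    proof (cases "\<mu> b = 0")
      case True then show ?thesis by (simp add: coef_def)
    next
      case False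
      then have mp: "\<mu> b > 0" using mu0[of b] by simp
      have le: "lp \<le> \<mu> b" using lp(2) bB False unfolding \<mu>_def by blast
      have "coef k b * coef k b = (c k \<bullet> b) * (c k \<bullet> b) / \<mu> b"
        using False mp by (simp add: coef_def)
      then have "lp * (coef k b * coef k b) = (lp / \<mu> b) * ((c k \<bullet> b) * (c k \<bullet> b))" by simp
      also have "\<dots> \<le> 1 * ((c k \<bullet> b) * (c k \<bullet> b))"
        using le mp by (intro mult_right_mono) auto
      finally show ?thesis by simp
    qed
    ultimately show ?thesis by (simp add: sum_distrib_left sum_mono)
  qed
  have "lp * (norm y)^2 = (\<Sum>k\<in>UNIV. lp * (norm (colv k y))^2)" by (simp add: K_norm sum_distrib_left)
  also have "\<dots> \<le> (\<Sum>k\<in>UNIV. (norm (colv k d))^2)" using nY by (intro sum_mono) (simp add: cy c_def)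
  also have "\<dots> = (norm d)^2" by (simp add: K_norm)
  finally show ?thesis using Ky unfolding S_def L_def lp_def by blast
qed

lemma deriv_line:
  fixes f :: "'a::euclidean_space \<Rightarrow> real"
  assumes df: "\<And>z. (f has_derivative (\<lambda>v. g z \<bullet> v)) (at z)"
  shows "((\<lambda>s. f (p + s *\<^sub>R h)) has_real_derivative (g (p + s *\<^sub>R h) \<bullet> h)) (at s)"
proof -
  have l: "((\<lambda>s. p + s *\<^sub>R h) has_derivative (\<lambda>ds. ds *\<^sub>R h)) (at s)"
    by (auto intro!: derivative_eq_intros)
  have "((\<lambda>s. f (p + s *\<^sub>R h)) has_derivative (\<lambda>ds. g (p + s *\<^sub>R h) \<bullet> (ds *\<^sub>R h))) (at s)"
    by (rule has_derivative_compose[OF l df])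
  moreover have "(\<lambda>ds. g (p + s *\<^sub>R h) \<bullet> (ds *\<^sub>R h)) = (*) (g (p + s *\<^sub>R h) \<bullet> h)"
    by (rule ext) (simp add: mult.commute)
  ultimately show ?thesis by (simp add: has_field_derivative_def)
qed

lemma schwarz_aux:
  fixes f :: "'a::euclidean_space \<Rightarrow> real" and g :: "'a \<Rightarrow> 'a"
  assumes df: "\<And>z. (f has_derivative (\<lambda>v. g z \<bullet> v)) (at z)"
    and dg: "(g has_derivative H) (at x)" and e: "e > 0"
  shows "\<exists>d>0. \<forall>t. 0 < t \<and> t < d \<longrightarrow>
    \<bar>f (x + t *\<^sub>R h + t *\<^sub>R k) - f (x + t *\<^sub>R h) - f (x + t *\<^sub>R k) + f x - t^2 * (H k \<bullet> h)\<bar> \<le> e * t^2"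
proof -
  have blH: "bounded_linear H" using dg by (simp add: has_derivative_at_alt)
  define M where "M = norm h + norm k + 1"
  have M: "M > 0" "norm h \<le> M" "norm k \<le> M" unfolding M_def using norm_ge_zero[of h] norm_ge_zero[of k] by linarith+
  define e' where "e' = e / (2 * M * M)"
  have e': "e' > 0" unfolding e'_def using e M by simp
  obtain d where d: "d > 0" and dd: "\<forall>y. norm (y - x) < d \<longrightarrow> norm (g y - g x - H (y - x)) \<le> e' * norm (y - x)"
    using dg e' unfolding has_derivative_at_alt by blast
  define r where "r y = g y - g x - H (y - x)" for y
  have rb: "norm (r (x + z)) \<le> e' * norm z" if "norm z < d" for z
    using dd that unfolding r_def by (metis add_diff_cancel_left')
  show ?thesis
  proof (intro exI[of _ "d / M"] conjI allI impI)
    show "d / M > 0" using d M by simp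
  next
    fix t assume t: "0 < t \<and> t < d / M"
    then have tM: "t * M < d" using M by (simp add: field_simps)
    define \<psi> where "\<psi> s = f ((x + t *\<^sub>R k) + s *\<^sub>R h) - f (x + s *\<^sub>R h)" for s
    define \<psi>' where "\<psi>' s = g ((x + t *\<^sub>R k) + s *\<^sub>R h) \<bullet> h - g (x + s *\<^sub>R h) \<bullet> h" for s
    have dpsi: "(\<psi> has_real_derivative \<psi>' s) (at s)" for s
      unfolding \<psi>_def \<psi>'_def by (intro DERIV_diff deriv_line[OF df])
    obtain \<xi> where xi: "0 < \<xi>" "\<xi> < t" and mv: "\<psi> t - \<psi> 0 = (t - 0) * \<psi>' \<xi>"
      using MVT2[of 0 t \<psi> \<psi>'] dpsi t by blast
    have phi: "\<psi> t - \<psi> 0 = f (x + t *\<^sub>R h + t *\<^sub>R k) - f (x + t *\<^sub>R h) - f (x + t *\<^sub>R k) + f x"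
      unfolding \<psi>_def by (simp add: algebra_simps)
    define z1 where "z1 = t *\<^sub>R k + \<xi> *\<^sub>R h"
    define z2 where "z2 = \<xi> *\<^sub>R h"
    have nz1: "norm z1 \<le> t * M"
    proof -
      have "norm z1 \<le> t * norm k + \<xi> * norm h" unfolding z1_def using t xi
        by (metis (no_types, lifting) abs_of_pos norm_scaleR norm_triangle_ineq order.trans order_refl)
      also have "\<dots> \<le> t * norm k + t * norm h" using xi by (simp add: mult_right_mono)
      also have "\<dots> = t * (norm h + norm k)" by (simp add: algebra_simps)
      also have "\<dots> \<le> t * M" using t unfolding M_def by simp
      finally show ?thesis .
    qed
    have nz2: "norm z2 \<le> t * M"
    proof -
      have "norm z2 = \<xi> * norm h" unfolding z2_def using xi by simp
      also have "\<dots> \<le> t * norm h" using xi by (simp add: mult_right_mono)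
      also have "\<dots> \<le> t * M" using t M by simp
      finally show ?thesis .
    qed
    have gdiff: "g (x + z1) - g (x + z2) = r (x + z1) - r (x + z2) + t *\<^sub>R H k"
    proof -
      have linH: "linear H" using blH by (rule bounded_linear.linear)
      have "H z1 - H z2 = H (z1 - z2)" using linH by (simp add: linear_diff)
      also have "z1 - z2 = t *\<^sub>R k" unfolding z1_def z2_def by simp
      also have "H (t *\<^sub>R k) = t *\<^sub>R H k" using linH by (simp add: linear_scale)
      finally have "H z1 - H z2 = t *\<^sub>R H k" .
      then show ?thesis unfolding r_def by (simp add: algebra_simps)
    qed
    have psi'eq: "\<psi>' \<xi> = (g (x + z1) - g (x + z2)) \<bullet> h"
      unfolding \<psi>'_def z1_def z2_def by (simp add: inner_diff_left algebra_simps)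
    have "\<bar>\<psi>' \<xi> - t * (H k \<bullet> h)\<bar> = \<bar>(r (x + z1) - r (x + z2)) \<bullet> h\<bar>"
      unfolding psi'eq gdiff by (simp add: inner_add_left)
    also have "\<dots> \<le> norm (r (x + z1) - r (x + z2)) * norm h" by (rule Cauchy_Schwarz_ineq2)
    also have "\<dots> \<le> (norm (r (x + z1)) + norm (r (x + z2))) * norm h"
      by (intro mult_right_mono norm_triangle_ineq4) simp
    also have "\<dots> \<le> (e' * (t * M) + e' * (t * M)) * M"
    proof (intro mult_mono add_mono)
      have "norm z1 < d" using nz1 tM by simp
      then show "norm (r (x + z1)) \<le> e' * (t * M)" using rb[of z1] nz1 e' by (meson mult_left_mono less_imp_le order_trans)
      have "norm z2 < d" using nz2 tM by simp
      then show "norm (r (x + z2)) \<le> e' * (t * M)" using rb[of z2] nz2 e' by (meson mult_left_mono less_imp_le order_trans)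
    qed (use M e' t in auto)
    also have "\<dots> = e * t" unfolding e'_def using M by (simp add: field_simps)
    finally have b1: "\<bar>\<psi>' \<xi> - t * (H k \<bullet> h)\<bar> \<le> e * t" .
    have "\<bar>f (x + t *\<^sub>R h + t *\<^sub>R k) - f (x + t *\<^sub>R h) - f (x + t *\<^sub>R k) + f x - t^2 * (H k \<bullet> h)\<bar>
        = t * \<bar>\<psi>' \<xi> - t * (H k \<bullet> h)\<bar>"
    proof -
      have "t * \<psi>' \<xi> - t * t * (H k \<bullet> h) = t * (\<psi>' \<xi> - t * (H k \<bullet> h))" by (simp add: algebra_simps)
      then show ?thesis using mv phi t by (simp add: power2_eq_square abs_mult)
    qed
    also have "\<dots> \<le> t * (e * t)" using b1 t by (simp add: mult_left_mono)
    finally show "\<bar>f (x + t *\<^sub>R h + t *\<^sub>R k) - f (x + t *\<^sub>R h) - f (x + t *\<^sub>R k) + f x - t^2 * (H k \<bullet> h)\<bar> \<le> e * t^2"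
      by (simp add: power2_eq_square mult_ac)
  qed
qed


lemma schwarz:
  fixes f :: "'a::euclidean_space \<Rightarrow> real" and g :: "'a \<Rightarrow> 'a"
  assumes df: "\<And>z. (f has_derivative (\<lambda>v. g z \<bullet> v)) (at z)"
    and dg: "(g has_derivative H) (at x)"
  shows "H k \<bullet> h = H h \<bullet> k"
proof (rule ccontr)
  assume ne: "H k \<bullet> h \<noteq> H h \<bullet> k"
  define a where "a = H k \<bullet> h"
  define b where "b = H h \<bullet> k"
  define e where "e = \<bar>a - b\<bar> / 4"
  have e: "e > 0" using ne unfolding e_def a_def b_def by simp
  obtain d1 where d1: "d1 > 0" "\<forall>t. 0 < t \<and> t < d1 \<longrightarrow>
    \<bar>f (x + t *\<^sub>R h + t *\<^sub>R k) - f (x + t *\<^sub>R h) - f (x + t *\<^sub>R k) + f x - t^2 * a\<bar> \<le> e * t^2"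
    using schwarz_aux[OF df dg e, of h k] unfolding a_def by blast
  obtain d2 where d2: "d2 > 0" "\<forall>t. 0 < t \<and> t < d2 \<longrightarrow>
    \<bar>f (x + t *\<^sub>R k + t *\<^sub>R h) - f (x + t *\<^sub>R k) - f (x + t *\<^sub>R h) + f x - t^2 * b\<bar> \<le> e * t^2"
    using schwarz_aux[OF df dg e, of k h] unfolding b_def by blast
  define t where "t = min d1 d2 / 2"
  have t: "0 < t" "t < d1" "t < d2" unfolding t_def using d1(1) d2(1) by auto
  define P where "P = f (x + t *\<^sub>R h + t *\<^sub>R k) - f (x + t *\<^sub>R h) - f (x + t *\<^sub>R k) + f x"
  have P2: "f (x + t *\<^sub>R k + t *\<^sub>R h) - f (x + t *\<^sub>R k) - f (x + t *\<^sub>R h) + f x = P"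
    unfolding P_def by (simp add: add_ac)
  have i1: "\<bar>P - t^2 * a\<bar> \<le> e * t^2" using d1(2) t unfolding P_def by blast
  have i2: "\<bar>P - t^2 * b\<bar> \<le> e * t^2" using d2(2) t P2 by metis
  have "(P - t^2 * b) - (P - t^2 * a) = t^2 * (a - b)" by (simp add: algebra_simps)
  then have "t^2 * \<bar>a - b\<bar> = \<bar>(P - t^2 * b) - (P - t^2 * a)\<bar>" by (simp add: abs_mult)
  also have "\<dots> \<le> 2 * e * t^2" using i1 i2 by linarith
  finally have "t^2 * \<bar>a - b\<bar> \<le> t^2 * (2 * e)" by (simp add: mult_ac)
  then have "\<bar>a - b\<bar> \<le> 2 * e" using t(1) by simp
  then show False using e unfolding e_def by simp
qed

lemma grad_eq:
  fixes F :: "'a::real_inner \<Rightarrow> real"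
  assumes d: "(F has_derivative (\<lambda>h. g \<bullet> h)) (at x)"
  shows "grad F x = g"
proof -
  have "\<exists>g. (F has_derivative (\<lambda>h. g \<bullet> h)) (at x)" using d by blast
  then have d2: "(F has_derivative (\<lambda>h. grad F x \<bullet> h)) (at x)" unfolding grad_def by (rule someI_ex)
  have "(\<lambda>h. grad F x \<bullet> h) = (\<lambda>h. g \<bullet> h)" by (rule has_derivative_unique[OF d2 d])
  then have "grad F x \<bullet> (grad F x - g) = g \<bullet> (grad F x - g)" by metis
  then have "(grad F x - g) \<bullet> (grad F x - g) = 0" by (simp add: inner_diff_left)
  then show ?thesis by simp
qed

lemma lin_repr:
  fixes l :: "'a::euclidean_space \<Rightarrow> real"
  assumes "linear l"
  shows "l h = (\<Sum>b\<in>Basis. l b *\<^sub>R b) \<bullet> h"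
proof -
  have "l h = l (\<Sum>b\<in>Basis. (h \<bullet> b) *\<^sub>R b)" by (simp add: euclidean_representation)
  also have "\<dots> = (\<Sum>b\<in>Basis. (h \<bullet> b) * l b)" using assms by (simp add: linear_sum linear_scale)
  also have "\<dots> = (\<Sum>b\<in>Basis. l b * (b \<bullet> h))" by (rule sum.cong) (simp_all add: inner_commute mult.commute)
  also have "\<dots> = (\<Sum>b\<in>Basis. l b *\<^sub>R b) \<bullet> h" by (simp add: inner_sum_left)
  finally show ?thesis .
qed

lemma grad_works:
  fixes f :: "'a::euclidean_space \<Rightarrow> real"
  assumes "f differentiable (at z)"
  shows "(f has_derivative (\<lambda>h. grad f z \<bullet> h)) (at z)"
    and "grad f z = (\<Sum>b\<in>Basis. frechet_derivative f (at z) b *\<^sub>R b)"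
proof -
  define D where "D = frechet_derivative f (at z)"
  have fd: "(f has_derivative D) (at z)" using assms unfolding D_def by (simp add: frechet_derivative_works)
  have "linear D" using fd by (simp add: has_derivative_linear)
  then have "D = (\<lambda>h. (\<Sum>b\<in>Basis. D b *\<^sub>R b) \<bullet> h)" by (intro ext lin_repr)
  then have fd2: "(f has_derivative (\<lambda>h. (\<Sum>b\<in>Basis. D b *\<^sub>R b) \<bullet> h)) (at z)" using fd by simp
  then show "grad f z = (\<Sum>b\<in>Basis. frechet_derivative f (at z) b *\<^sub>R b)" unfolding D_def by (rule grad_eq)
  then show "(f has_derivative (\<lambda>h. grad f z \<bullet> h)) (at z)" using fd2 unfolding D_def by simp
qed

lemma smooth_props:
  assumes "smooth_fun (f :: 'a::euclidean_space \<Rightarrow> real)"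
  shows "f differentiable (at z)" "b \<in> Basis \<Longrightarrow> (\<lambda>z. frechet_derivative f (at z) b) differentiable (at z)"
proof -
  obtain S where S: "f \<in> S" "\<forall>g\<in>S. (\<forall>x. g differentiable (at x)) \<and> (\<forall>b\<in>Basis. (\<lambda>x. frechet_derivative g (at x) b) \<in> S)"
    using assms unfolding smooth_fun_def by blast
  show "f differentiable (at z)" using S by blast
  assume "b \<in> Basis"
  then have "(\<lambda>x. frechet_derivative f (at x) b) \<in> S" using S by blast
  then show "(\<lambda>z. frechet_derivative f (at z) b) differentiable (at z)" using S(2) by blast
qed

lemma grad_smooth_diff:
  assumes "smooth_fun (f :: 'a::euclidean_space \<Rightarrow> real)"
  shows "grad f differentiable (at z)"
proof -
  have "grad f = (\<lambda>z. \<Sum>b\<in>Basis. frechet_derivative f (at z) b *\<^sub>R b)"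
    using grad_works(2)[OF smooth_props(1)[OF assms]] by (intro ext) blast
  moreover have "(\<lambda>z. \<Sum>b\<in>Basis. frechet_derivative f (at z) b *\<^sub>R b) differentiable (at z)"
    by (intro differentiable_sum ballI differentiable_scaleR smooth_props(2)[OF assms] differentiable_const finite_Basis)
  ultimately show ?thesis by simp
qed

lemma has_derivative_vec_lambda:
  fixes f :: "'a::real_normed_vector \<Rightarrow> real^'n::finite^'m::finite"
  assumes comp: "\<And>i. ((\<lambda>x. f x $ i) has_derivative (\<lambda>h. f' h $ i)) (at x)"
    and bl: "bounded_linear f'"
  shows "(f has_derivative f') (at x)"
proof -
  have "((\<lambda>y. (1 / norm (y - x)) *\<^sub>R ((f y $ i) - ((f x $ i) + f' (y - x) $ i))) \<longlongrightarrow> 0) (at x)" for i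
    using comp[of i] unfolding has_derivative_within by blast
  then have "((\<lambda>y. (1 / norm (y - x)) *\<^sub>R (f y - (f x + f' (y - x)))) \<longlongrightarrow> 0) (at x)"
    by (intro vec_tendstoI[where f="\<lambda>y. (1 / norm (y - x)) *\<^sub>R (f y - (f x + f' (y - x)))"]) simp
  then show ?thesis using bl unfolding has_derivative_within by blast
qed

lemma vec_nth_deriv: "((\<lambda>\<theta>. \<theta> $ i) has_derivative (\<lambda>h. h $ i)) (at x)"
  by (rule bounded_linear_imp_has_derivative[OF bounded_linear_vec_nth])

lemma F_grad:
  fixes f :: "'m::finite \<Rightarrow> real^'n::finite \<Rightarrow> real"
  assumes sm: "\<forall>i. smooth_fun (f i)"
  shows "((\<lambda>\<theta>. \<Sum>i\<in>UNIV. f i (\<theta> $ i)) has_derivative (\<lambda>h. (\<chi> i. grad (f i) (\<theta> $ i)) \<bullet> h)) (at \<theta>)"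
    and "grad (\<lambda>\<theta>. \<Sum>i\<in>UNIV. f i (\<theta> $ i)) \<theta> = (\<chi> i. grad (f i) (\<theta> $ i))"
proof -
  have each: "((\<lambda>\<theta>. f i (\<theta> $ i)) has_derivative (\<lambda>h. grad (f i) (\<theta> $ i) \<bullet> (h $ i))) (at \<theta>)" for i
    by (rule has_derivative_compose[OF vec_nth_deriv grad_works(1)[OF smooth_props(1)[OF sm[rule_format]]]])
  have "((\<lambda>\<theta>. \<Sum>i\<in>UNIV. f i (\<theta> $ i)) has_derivative (\<lambda>h. \<Sum>i\<in>UNIV. grad (f i) (\<theta> $ i) \<bullet> (h $ i))) (at \<theta>)"
    by (rule has_derivative_sum) (rule each)
  moreover have "(\<lambda>h. \<Sum>i\<in>UNIV. grad (f i) (\<theta> $ i) \<bullet> (h $ i)) = (\<lambda>h. (\<chi> i. grad (f i) (\<theta> $ i)) \<bullet> h)"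
    by (rule ext) (simp add: inner_vec_def)
  ultimately show d: "((\<lambda>\<theta>. \<Sum>i\<in>UNIV. f i (\<theta> $ i)) has_derivative (\<lambda>h. (\<chi> i. grad (f i) (\<theta> $ i)) \<bullet> h)) (at \<theta>)"
    by simp
  then show "grad (\<lambda>\<theta>. \<Sum>i\<in>UNIV. f i (\<theta> $ i)) \<theta> = (\<chi> i. grad (f i) (\<theta> $ i))" by (rule grad_eq)
qed

lemma F_hess:
  fixes f :: "'m::finite \<Rightarrow> real^'n::finite \<Rightarrow> real" and \<theta> :: "real^'n^'m"
  assumes sm: "\<forall>i. smooth_fun (f i)"
  defines "HF \<equiv> (\<lambda>h. \<chi> i. frechet_derivative (grad (f i)) (at (\<theta> $ i)) (h $ i))"
  shows "(grad (\<lambda>\<theta>. \<Sum>i\<in>UNIV. f i (\<theta> $ i)) has_derivative HF) (at \<theta>)"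
    and "symop HF"
proof -
  define Hi where "Hi i = frechet_derivative (grad (f i)) (at (\<theta> $ i))" for i
  have dgi: "(grad (f i) has_derivative Hi i) (at z)" if "z = \<theta> $ i" for i z
    unfolding Hi_def that using grad_smooth_diff[OF sm[rule_format]] by (simp add: frechet_derivative_works)
  have linHi: "linear (Hi i)" for i using dgi[OF refl, of i] by (rule has_derivative_linear)
  have gF: "grad (\<lambda>\<theta>. \<Sum>i\<in>UNIV. f i (\<theta> $ i)) = (\<lambda>\<theta>. \<chi> i. grad (f i) (\<theta> $ i))"
    using F_grad(2)[OF sm] by (intro ext) blast
  have HFdef: "HF = (\<lambda>h. \<chi> i. Hi i (h $ i))" unfolding HF_def Hi_def by simp
  have linHF: "linear HF" unfolding HFdef
    by (rule linearI) (simp_all add: vec_eq_iff linear_add[OF linHi] linear_scale[OF linHi])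
  have "((\<lambda>\<theta>. \<chi> i. grad (f i) (\<theta> $ i)) has_derivative HF) (at \<theta>)"
  proof (rule has_derivative_vec_lambda)
    fix i
    show "((\<lambda>x. (\<chi> i. grad (f i) (x $ i)) $ i) has_derivative (\<lambda>h. HF h $ i)) (at \<theta>)"
      unfolding HFdef by simp (rule has_derivative_compose[OF vec_nth_deriv dgi[OF refl]])
  next
    show "bounded_linear HF" using linHF by (simp add: linear_conv_bounded_linear)
  qed
  then show "(grad (\<lambda>\<theta>. \<Sum>i\<in>UNIV. f i (\<theta> $ i)) has_derivative HF) (at \<theta>)" unfolding gF .
  have dfi: "\<And>z. (f i has_derivative (\<lambda>v. grad (f i) z \<bullet> v)) (at z)" for i
    by (rule grad_works(1)[OF smooth_props(1)[OF sm[rule_format]]])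
  have "HF u \<bullet> w = u \<bullet> HF w" for u w
  proof -
    have "HF u \<bullet> w = (\<Sum>i\<in>UNIV. Hi i (u $ i) \<bullet> w $ i)" unfolding HFdef inner_vec_def[of _ w] by simp
    also have "\<dots> = (\<Sum>i\<in>UNIV. Hi i (w $ i) \<bullet> u $ i)"
      by (rule sum.cong[OF refl]) (rule schwarz[OF dfi dgi[OF refl]])
    also have "\<dots> = (\<Sum>i\<in>UNIV. u $ i \<bullet> Hi i (w $ i))" by (simp add: inner_commute)
    also have "\<dots> = u \<bullet> HF w" unfolding HFdef inner_vec_def[of u] by simp
    finally show ?thesis .
  qed
  then show "symop HF" unfolding symop_def by blast
qed

theorem proposition3:
  fixes f :: "'m::finite \<Rightarrow> real^'n::finite \<Rightarrow> real"
    and E :: "'m \<Rightarrow> 'm \<Rightarrow> bool"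
    and r :: "real^'n" and \<theta>0 x :: "real^'n^'m" and \<epsilon> \<gamma> :: real
  assumes m2: "CARD('m) \<ge> 2"
    and smooth: "\<forall>i. smooth_fun (f i)"
    and graph: "connected_graph E"
    and init: "block_sum \<theta>0 = r"
    and i: "norm (grad (\<lambda>y. (\<Sum>i\<in>UNIV. f i ((\<theta>0 + kron_I (psd_sqrt (laplacian E)) y) $ i))) x) \<le> \<epsilon>"
    and ii: "block_sum x = 0"
    and iii: "lambda_min (hess (\<lambda>y. (\<Sum>i\<in>UNIV. f i ((\<theta>0 + kron_I (psd_sqrt (laplacian E)) y) $ i))) x) \<ge> - \<gamma>"
  shows "second_order_optimal (\<lambda>\<theta>. \<Sum>i\<in>UNIV. f i (\<theta> $ i)) r (laplacian E) \<epsilon>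
           (\<gamma> / lambda_min_pos (laplacian E)) (\<theta>0 + kron_I (psd_sqrt (laplacian E)) x)"
proof -
  define L where "L = laplacian E"
  define S where "S = psd_sqrt L"
  define K :: "real^'n^'m \<Rightarrow> real^'n^'m" where "K = kron_I S"
  define F :: "real^'n^'m \<Rightarrow> real" where "F = (\<lambda>\<theta>. \<Sum>i\<in>UNIV. f i (\<theta> $ i))"
  define \<theta> where "\<theta> = \<theta>0 + K x"
  define Psi :: "real^'n^'m \<Rightarrow> real" where "Psi = (\<lambda>y. \<Sum>i\<in>UNIV. f i ((\<theta>0 + K y) $ i))"
  have PsiF: "Psi y = F (\<theta>0 + K y)" for y unfolding Psi_def F_def by simp
  have i': "norm (grad Psi x) \<le> \<epsilon>" using i unfolding Psi_def K_def S_def L_def .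
  have iii': "lambda_min (hess Psi x) \<ge> - \<gamma>" using iii unfolding Psi_def K_def S_def L_def .
  obtain B where B: "finite B" "pairwise orthogonal B" "\<forall>b\<in>B. norm b = 1" "span B = UNIV"
    "\<forall>b\<in>B. L *v b = (b \<bullet> (L *v b)) *\<^sub>R b"
    and sS: "transpose S = S" and SS: "S ** S = L"
    using psd_sqrt_basis[OF lap_sym[OF graph] lap_psd[OF graph]] unfolding L_def S_def by (metis (no_types))
  define lp where "lp = lambda_min_pos L"
  have lp: "0 < lp" using lap_lambda_pos[OF graph m2 B[unfolded L_def]] unfolding lp_def L_def by blast
  have L1: "L *v (\<chi> i. 1) = 0"
  proof -
    have one: "((\<chi> i. 1)::real^'m) $ j = 1" for j by simp
    show ?thesis unfolding L_def vec_eq_iff by (simp only: lap_mult[OF graph] one) (simp cong: if_cong)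
  qed
  have S1: "S *v (\<chi> i. 1) = 0" by (rule sqrt_one[OF sS SS L1])
  have linK: "linear K" unfolding K_def by (rule K_lin)
  have blK: "bounded_linear K" using linK by (simp add: linear_conv_bounded_linear)
  have Ksym: "K u \<bullet> w = u \<bullet> K w" for u w unfolding K_def by (rule K_sym[OF sS])
  have aff: "((\<lambda>y. \<theta>0 + K y) has_derivative K) (at y)" for y
  proof -
    have "((\<lambda>y. \<theta>0 + K y) has_derivative (\<lambda>h. 0 + K h)) (at y)"
      by (intro has_derivative_add has_derivative_const bounded_linear_imp_has_derivative[OF blK])
    then show ?thesis by simp
  qed
  have gF: "grad F z = (\<chi> i. grad (f i) (z $ i))" for z unfolding F_def by (rule F_grad(2)[OF smooth])
  have dF: "(F has_derivative (\<lambda>h. grad F z \<bullet> h)) (at z)" for z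
    unfolding gF unfolding F_def by (rule F_grad(1)[OF smooth])
  have gPsi: "grad Psi y = K (grad F (\<theta>0 + K y))" for y
  proof -
    have "((\<lambda>y. F (\<theta>0 + K y)) has_derivative (\<lambda>h. grad F (\<theta>0 + K y) \<bullet> K h)) (at y)"
      by (rule has_derivative_compose[OF aff dF])
    moreover have "(\<lambda>h. grad F (\<theta>0 + K y) \<bullet> K h) = (\<lambda>h. K (grad F (\<theta>0 + K y)) \<bullet> h)"
      by (rule ext) (simp add: Ksym)
    moreover have "(\<lambda>y. F (\<theta>0 + K y)) = Psi" using PsiF by (intro ext) simp
    ultimately have "(Psi has_derivative (\<lambda>h. K (grad F (\<theta>0 + K y)) \<bullet> h)) (at y)" by simp
    then show ?thesis by (rule grad_eq)
  qed
  define HF where "HF = (\<lambda>h. \<chi> i. frechet_derivative (grad (f i)) (at (\<theta> $ i)) (h $ i))"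
  have dG: "(grad F has_derivative HF) (at \<theta>)" unfolding F_def HF_def by (rule F_hess(1)[OF smooth])
  have symHF: "symop HF" unfolding HF_def by (rule F_hess(2)[OF smooth])
  have linHF: "linear HF" using dG by (rule has_derivative_linear)
  have hF: "hess F \<theta> = HF" unfolding hess_def using dG by (rule frechet_derivative_at[symmetric])
  define A where "A = (\<lambda>h. K (HF (K h)))"
  have dA: "(grad Psi has_derivative A) (at x)"
  proof -
    have "((\<lambda>y. grad F (\<theta>0 + K y)) has_derivative (\<lambda>h. HF (K h))) (at x)"
      using has_derivative_compose[OF aff[of x], of "grad F" HF] dG unfolding \<theta>_def by simp
    then have "((\<lambda>y. K (grad F (\<theta>0 + K y))) has_derivative (\<lambda>h. K (HF (K h)))) (at x)"
      using has_derivative_compose[OF _ bounded_linear_imp_has_derivative[OF blK]] by blast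
    moreover have "grad Psi = (\<lambda>y. K (grad F (\<theta>0 + K y)))" using gPsi by (intro ext) simp
    ultimately show ?thesis unfolding A_def by simp
  qed
  have hPsi: "hess Psi x = A" unfolding hess_def using dA by (rule frechet_derivative_at[symmetric])
  have linA: "linear A" using dA by (rule has_derivative_linear)
  have symA: "symop A" unfolding symop_def A_def
  proof (intro allI)
    fix u w
    have "K (HF (K u)) \<bullet> w = HF (K u) \<bullet> K w" by (simp add: Ksym)
    also have "\<dots> = K u \<bullet> HF (K w)" using symHF unfolding symop_def by blast
    also have "\<dots> = u \<bullet> K (HF (K w))" by (simp add: Ksym)
    finally show "K (HF (K u)) \<bullet> w = u \<bullet> K (HF (K w))" .
  qed
  have lmA: "lambda_min A \<ge> - \<gamma>" using iii' hPsi by simp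
  have gam: "\<gamma> \<ge> 0"
  proof -
    define v0 :: "real^'n^'m" where "v0 = (\<chi> i. (\<chi> k. 1))"
    have Kv0: "K v0 = 0" unfolding K_def v0_def by (rule K_const[OF S1])
    have "v0 \<noteq> 0" unfolding v0_def by (simp add: vec_eq_iff)
    moreover have "A v0 = 0 *\<^sub>R v0" unfolding A_def using Kv0 linHF linK by (simp add: linear_0)
    ultimately have "lambda_min A \<le> 0" by (rule lambda_min_le[OF symA])
    then show ?thesis using lmA by simp
  qed
  have part1: "norm (kron_I (psd_sqrt L) (grad F \<theta>)) \<le> \<epsilon>"
    using i' gPsi[of x] unfolding \<theta>_def K_def S_def by simp
  have part2: "block_sum \<theta> = r"
  proof -
    have "block_sum \<theta> = block_sum \<theta>0 + block_sum (K x)" unfolding \<theta>_def by (simp add: block_sum_def sum.distrib)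
    also have "block_sum (K x) = 0" unfolding K_def by (rule K_block_sum[OF sS S1])
    finally show ?thesis using init by simp
  qed
  have part3: "d \<bullet> hess F \<theta> d \<ge> - (\<gamma> / lp) * (norm d)^2" if bd: "block_sum d = 0" for d
  proof -
    obtain y where y: "K y = d" "lp * (norm y)^2 \<le> (norm d)^2"
      using K_preimage[OF graph m2 bd] unfolding K_def S_def lp_def L_def by blast
    have "d \<bullet> hess F \<theta> d = K y \<bullet> HF (K y)" using hF y(1) by simp
    also have "\<dots> = y \<bullet> A y" unfolding A_def by (simp add: Ksym)
    finally have e1: "d \<bullet> hess F \<theta> d = y \<bullet> A y" .
    have "lambda_min A * (norm y)^2 \<le> y \<bullet> A y" by (rule lambda_min_bound[OF linA symA])
    moreover have "- \<gamma> * (norm y)^2 \<le> lambda_min A * (norm y)^2" using mult_right_mono[OF lmA, of "(norm y)^2"] by simp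
    moreover have "- (\<gamma> / lp) * (norm d)^2 \<le> - \<gamma> * (norm y)^2"
    proof -
      have "(norm y)^2 \<le> (norm d)^2 / lp" using y(2) lp by (simp add: field_simps)
      then have "\<gamma> * (norm y)^2 \<le> \<gamma> * ((norm d)^2 / lp)" using mult_left_mono[OF _ gam] by blast
      then show ?thesis by simp
    qed
    ultimately show ?thesis using e1 by linarith
  qed
  have "second_order_optimal F r L \<epsilon> (\<gamma> / lp) \<theta>"
    unfolding second_order_optimal_def using part1 part2 part3 unfolding S_def by blast
  then show ?thesis unfolding F_def L_def \<theta>_def K_def S_def lp_def .
qed

end
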